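(* Let $(g(x))_{x\ge0}$ be a semigroup acting on a real finite-dimensional vector space $V$, with SRPD $V=\bigoplus_{i=1}^nV_i$. Let $I$ be the set of indices $i$ such that $V_i$ is of first type and its eigenvalue satisfies $\lambda(x)=0$ for all $x>0$. Then for every $x>0$, $\ker g(x)=\bigoplus_{i\in I}V_i$.
   Context: A semigroup is a map $g:[0,\infty)\to L(V)$ with $g(0)=\mathrm{id}$ and $g(x+y)=g(x)g(y)$ for all $x,y\ge0$. A simultaneous real primary decomposition (SRPD) is a decomposition $V=\bigoplus_{i=1}^nV_i$ into nonzero subspaces, each $g(x)$-invariant for all $x\ge0$, such that each $V_i$ is either of first type: for every $x\ge0$, $g(x)|_{V_i}$ has exactly one (complex) eigenvalue $\lambda(x)$, which is real and $\ge0$; or of second type: for every $x\ge 0$ the eigenvalues of $g(x)|_{V_i}$ lie in $\{\lambda(x),\overline{\lambda(x)}\}$ for some $\lambda(x)\in\mathbb C$, with $\lambda(x)\notin\mathbb R$ for some $x$. *)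

theory Defs
  imports "HOL-Analysis.Analysis"
begin

definition is_semigroup :: "(real \<Rightarrow> 'a::euclidean_space \<Rightarrow> 'a) \<Rightarrow> bool" where
  "is_semigroup g \<longleftrightarrow> (\<forall>x\<ge>0. linear (g x)) \<and> g 0 = id \<and>
     (\<forall>x\<ge>0. \<forall>y\<ge>0. g (x + y) = g x \<circ> g y)"

text \<open>mu is a (complex) eigenvalue of the restriction of the real linear map T to the
invariant subspace W, i.e. an eigenvalue of the complexification of T restricted to W:
T(u + i v) = mu (u + i v) with u + i v nonzero, u, v in W, written out in real and imaginary parts.\<close>
definition cplx_eigenvalue_on :: "('a::real_vector \<Rightarrow> 'a) \<Rightarrow> 'a set \<Rightarrow> complex \<Rightarrow> bool" where
  "cplx_eigenvalue_on T W mu \<longleftrightarrow>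
     (\<exists>u\<in>W. \<exists>v\<in>W. (u \<noteq> 0 \<or> v \<noteq> 0) \<and>
        T u = Re mu *\<^sub>R u - Im mu *\<^sub>R v \<and> T v = Im mu *\<^sub>R u + Re mu *\<^sub>R v)"

definition eigenvalues_on :: "('a::real_vector \<Rightarrow> 'a) \<Rightarrow> 'a set \<Rightarrow> complex set" where
  "eigenvalues_on T W = {mu. cplx_eigenvalue_on T W mu}"

definition first_type :: "(real \<Rightarrow> 'a::real_vector \<Rightarrow> 'a) \<Rightarrow> 'a set \<Rightarrow> bool" where
  "first_type g W \<longleftrightarrow>
     (\<forall>x\<ge>0. \<exists>r::real. r \<ge> 0 \<and> eigenvalues_on (g x) W = {complex_of_real r})"

definition second_type :: "(real \<Rightarrow> 'a::real_vector \<Rightarrow> 'a) \<Rightarrow> 'a set \<Rightarrow> bool" where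
  "second_type g W \<longleftrightarrow>
     (\<exists>lam :: real \<Rightarrow> complex.
        (\<forall>x\<ge>0. eigenvalues_on (g x) W \<subseteq> {lam x, cnj (lam x)}) \<and>
        (\<exists>x\<ge>0. lam x \<notin> \<real>))"

definition is_SRPD :: "(real \<Rightarrow> 'a::euclidean_space \<Rightarrow> 'a) \<Rightarrow> nat \<Rightarrow> (nat \<Rightarrow> 'a set) \<Rightarrow> bool" where
  "is_SRPD g n V \<longleftrightarrow>
     (\<forall>i<n. subspace (V i) \<and> V i \<noteq> {0}) \<and>
     (\<forall>v. \<exists>w. (\<forall>i<n. w i \<in> V i) \<and> v = (\<Sum>i<n. w i)) \<and>
     (\<forall>w. (\<forall>i<n. w i \<in> V i) \<and> (\<Sum>i<n. w i) = 0 \<longrightarrow> (\<forall>i<n. w i = 0)) \<and>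
     (\<forall>i<n. \<forall>x\<ge>0. g x ` V i \<subseteq> V i) \<and>
     (\<forall>i<n. first_type g (V i) \<or> second_type g (V i))"

end

theory Submission imports Defs "HOL-Computational_Algebra.Fundamental_Theorem_Algebra" begin

definition peval :: "real poly \<Rightarrow> ('a::real_vector \<Rightarrow> 'a) \<Rightarrow> 'a \<Rightarrow> 'a" where
  "peval p T u = foldr (\<lambda>a v. a *\<^sub>R u + T v) (coeffs p) 0"

lemma peval_0[simp]: "peval 0 T u = 0"
  by (simp add: peval_def)

lemma peval_pCons:
  assumes "linear T"
  shows "peval (pCons a p) T u = a *\<^sub>R u + T (peval p T u)"
proof (cases "a = 0 \<and> p = 0")
  case True
  then show ?thesis using linear_0[OF assms] by (simp add: peval_def)
next
  case False
  then have "coeffs (pCons a p) = a # coeffs p"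
    by (auto simp: coeffs_pCons_eq_cCons cCons_def)
  then show ?thesis by (simp add: peval_def)
qed

lemma peval_add:
  assumes "linear T"
  shows "peval (p + q) T u = peval p T u + peval q T u"
proof (induction p q rule: poly_induct2)
  case 0 then show ?case by simp
next
  case (pCons a p b q)
  then show ?case using assms
    by (simp add: peval_pCons linear_add algebra_simps)
qed

lemma peval_smult:
  assumes "linear T"
  shows "peval (smult c p) T u = c *\<^sub>R peval p T u"
proof (induction p)
  case 0 then show ?case by simp
next
  case (pCons a p)
  then show ?case using assms
    by (simp add: peval_pCons linear_scale linear_add algebra_simps)
qed

lemma peval_linear_u:
  assumes "linear T"
  shows "peval p T (u + v) = peval p T u + peval p T v" "peval p T (c *\<^sub>R u) = c *\<^sub>R peval p T u"
proof -
  show "peval p T (u + v) = peval p T u + peval p T v"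
    by (induction p) (simp_all add: peval_pCons assms linear_add algebra_simps)
  show "peval p T (c *\<^sub>R u) = c *\<^sub>R peval p T u"
    by (induction p) (simp_all add: peval_pCons assms linear_add linear_scale algebra_simps)
qed

lemma peval_linear: "linear T \<Longrightarrow> linear (peval p T)"
  by (rule linearI) (simp_all add: peval_linear_u)

lemma peval_mult:
  assumes "linear T"
  shows "peval (p * q) T u = peval p T (peval q T u)"
proof (induction p)
  case 0 then show ?case by simp
next
  case (pCons a p)
  have "pCons a p * q = smult a q + pCons 0 (p * q)" by simp
  then show ?case using pCons assms
    by (simp add: peval_pCons peval_add peval_smult)
qed

lemma peval_monom:
  assumes "linear T"
  shows "peval (monom a k) T u = a *\<^sub>R (T ^^ k) u"
proof (induction k)
  case 0 then show ?case using assms by (simp add: monom_0 peval_pCons linear_0)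
next
  case (Suc k)
  then show ?case using assms by (simp add: monom_Suc peval_pCons linear_scale)
qed

lemma peval_sum:
  assumes "linear T"
  shows "peval (\<Sum>k\<in>A. f k) T u = (\<Sum>k\<in>A. peval (f k) T u)"
  by (induction A rule: infinite_finite_induct) (simp_all add: peval_add assms)

lemma peval_in:
  assumes "linear T" "subspace R" "T ` R \<subseteq> R" "u \<in> R"
  shows "peval p T u \<in> R"
proof (induction p)
  case 0 then show ?case using assms by (simp add: subspace_0)
next
  case (pCons a p)
  then show ?case using assms
    by (auto simp: peval_pCons intro!: subspace_add subspace_mul)
qed



definition cp :: "real poly \<Rightarrow> complex \<Rightarrow> complex" where
  "cp p z = poly (map_poly complex_of_real p) z"

lemma cp_pCons[simp]: "cp (pCons a p) z = of_real a + z * cp p z"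
  by (simp add: cp_def map_poly_pCons)

lemma cp_0[simp]: "cp 0 z = 0"
  by (simp add: cp_def)

lemma cp_add: "cp (p + q) z = cp p z + cp q z"
  by (induction p q rule: poly_induct2) (simp_all add: algebra_simps)

lemma cp_smult: "cp (smult c p) z = of_real c * cp p z"
  by (induction p) (simp_all add: algebra_simps)

lemma cp_mult: "cp (p * q) z = cp p z * cp q z"
proof (induction p)
  case 0 then show ?case by simp
next
  case (pCons a p)
  have "pCons a p * q = smult a q + pCons 0 (p * q)" by simp
  then show ?case using pCons by (simp add: cp_add cp_smult algebra_simps)
qed

lemma cp_real: "cp p (of_real x) = of_real (poly p x)"
  by (induction p) simp_all

lemma exists_annihilator:
  fixes T :: "'a::euclidean_space \<Rightarrow> 'a"
  assumes lin: "linear T"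
  shows "\<exists>p. p \<noteq> 0 \<and> peval p T u = 0"
proof -
  define N where "N = DIM('a)"
  define f where "f k = (T ^^ k) u" for k
  show ?thesis
  proof (cases "inj_on f {..N}")
    case False
    then obtain j k where jk: "j \<le> N" "k \<le> N" "j \<noteq> k" "f j = f k"
      unfolding inj_on_def by auto
    define p where "p = monom (1::real) j + monom (-1) k"
    have "coeff p j = 1" using jk by (simp add: p_def coeff_monom)
    then have "p \<noteq> 0" by auto
    moreover have "peval p T u = 0"
      using jk by (simp add: p_def peval_add peval_monom lin f_def)
    ultimately show ?thesis by blast
  next
    case True
    define B where "B = f ` {..N}"
    have cB: "card B = N + 1" using True by (simp add: B_def card_image)
    have "\<not> independent B"
    proof
      assume "independent B"
      then have "card B \<le> DIM('a)" using independent_bound by blast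
      with cB N_def show False by simp
    qed
    moreover have "finite B" by (simp add: B_def)
    ultimately obtain c where c: "(\<Sum>v\<in>B. c v *\<^sub>R v) = 0" and v: "\<exists>v\<in>B. c v \<noteq> 0"
      unfolding eucl.independent_explicit by blast
    then obtain k0 where k0: "k0 \<le> N" "c (f k0) \<noteq> 0" unfolding B_def by auto
    define p where "p = (\<Sum>k\<le>N. monom (c (f k)) k)"
    have "coeff p k0 = c (f k0)"
      using k0 by (simp add: p_def coeff_sum coeff_monom)
    then have "p \<noteq> 0" using k0 by auto
    have "peval p T u = (\<Sum>k\<le>N. c (f k) *\<^sub>R f k)"
      by (simp add: p_def peval_sum peval_monom lin f_def)
    also have "\<dots> = (\<Sum>v\<in>B. c v *\<^sub>R v)"
      unfolding B_def by (subst sum.reindex[OF True]) simp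
    finally show ?thesis using c \<open>p \<noteq> 0\<close> by auto
  qed
qed


lemma exists_eig:
  fixes T :: "'a::euclidean_space \<Rightarrow> 'a"
  assumes lin: "linear T" and R: "subspace R" "T ` R \<subseteq> R" and ne: "u0 \<in> R" "u0 \<noteq> 0"
  shows "\<exists>\<mu>. cplx_eigenvalue_on T R \<mu>"
proof -
  define P where "P n \<longleftrightarrow> (\<exists>u\<in>R. u \<noteq> 0 \<and> (\<exists>p. p \<noteq> 0 \<and> degree p = n \<and> peval p T u = 0))" for n
  have ex: "\<exists>n. P n" using exists_annihilator[OF lin, of u0] ne unfolding P_def by blast
  define n where "n = (LEAST n. P n)"
  have Pn: "P n" unfolding n_def by (rule LeastI_ex) (rule ex)
  have min: "\<And>m. P m \<Longrightarrow> n \<le> m" unfolding n_def by (rule Least_le)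
  obtain u p where u: "u \<in> R" "u \<noteq> 0" and p: "p \<noteq> 0" "degree p = n" "peval p T u = 0"
    using Pn unfolding P_def by auto
  have minq: "peval q T u \<noteq> 0" if "q \<noteq> 0" "degree q < n" for q
  proof
    assume "peval q T u = 0"
    then have "P (degree q)" using u that unfolding P_def by blast
    with min that show False by fastforce
  qed
  have dp: "degree p \<noteq> 0"
  proof
    assume "degree p = 0"
    then obtain c where c: "p = [:c:]" by (rule degree_eq_zeroE)
    with p have "c \<noteq> 0" by auto
    have "peval p T u = c *\<^sub>R u" using c lin by (simp add: peval_pCons linear_0)
    with p u \<open>c \<noteq> 0\<close> show False by simp
  qed
  define p' where "p' = map_poly complex_of_real p"
  have "degree p' = degree p" unfolding p'_def by (rule degree_map_poly) simp
  then obtain z where z: "poly p' z = 0"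
    using fundamental_theorem_of_algebra_alt[of p'] dp by fastforce
  then have z: "cp p z = 0" by (simp add: cp_def p'_def)
  define a where "a = Re z"
  define b where "b = Im z"
  show ?thesis
  proof (cases "b = 0")
    case True
    then have "z = of_real a" by (simp add: a_def b_def complex_eq_iff)
    then have "poly p a = 0" using z cp_real[of p a] by simp
    then have "[:-a, 1:] dvd p" by (simp add: poly_eq_0_iff_dvd)
    then obtain q where q: "p = [:-a, 1:] * q" by (rule dvdE)
    have "q \<noteq> 0" using p q by auto
    have "degree ([:-a, 1:] * q) = degree [:-a, 1:] + degree q"
      using \<open>q \<noteq> 0\<close> by (intro degree_mult_eq) auto
    then have "degree p = degree q + 1" using q by simp
    define w where "w = peval q T u"
    have w: "w \<noteq> 0" "w \<in> R" using minq[OF \<open>q \<noteq> 0\<close>] \<open>degree p = degree q + 1\<close> p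
        peval_in[OF lin R u(1)] by (auto simp: w_def)
    have "peval [:-a, 1:] T w = peval ([:-a, 1:] * q) T u" by (simp only: peval_mult[OF lin] w_def)
    then have "peval [:-a, 1:] T w = 0" using p q by simp
    then have Tw: "T w = a *\<^sub>R w" using lin by (simp add: peval_pCons linear_0)
    have "cplx_eigenvalue_on T R (complex_of_real a)"
      unfolding cplx_eigenvalue_on_def
      using w Tw lin R by (intro bexI[of _ w] bexI[of _ 0]) (auto simp: linear_0 subspace_0)
    then show ?thesis by blast
  next
    case False
    define Q where "Q = [:a^2 + b^2, -2*a, 1:]"
    have "Q \<noteq> 0" "degree Q = 2" by (simp_all add: Q_def)
    define q where "q = p div Q"
    define r where "r = p mod Q"
    have pqr: "p = q * Q + r" by (simp add: q_def r_def)
    have cQ: "cp Q z = 0"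
      unfolding Q_def using False
      by (simp add: complex_eq_iff a_def b_def power2_eq_square algebra_simps)
    have cr: "cp r z = 0" using z pqr cQ by (simp add: cp_add cp_mult)
    have "r = 0 \<or> degree r < 2" using degree_mod_less[OF \<open>Q \<noteq> 0\<close>, of p] \<open>degree Q = 2\<close>
      by (simp add: r_def)
    then have r2: "r = [:coeff r 0, coeff r 1:]"
      by (auto intro!: poly_eqI simp: coeff_pCons coeff_eq_0 split: nat.split)
    then have "cp r z = of_real (coeff r 0) + z * of_real (coeff r 1)"
      by (metis cp_pCons cp_0 mult_zero_right add_0_right)
    with cr have "Im z * coeff r 1 = 0" "Re z * coeff r 1 + coeff r 0 = 0"
      by (simp_all add: complex_eq_iff algebra_simps)
    with False have "coeff r 1 = 0" "coeff r 0 = 0" by (simp_all add: b_def)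
    with r2 have "r = 0" by simp
    with pqr have pQq: "p = Q * q" by (simp add: mult.commute)
    have "q \<noteq> 0" using p pQq by auto
    have "degree (Q * q) = degree Q + degree q"
      using \<open>q \<noteq> 0\<close> \<open>Q \<noteq> 0\<close> by (intro degree_mult_eq) auto
    then have "degree p = degree q + 2" using pQq \<open>degree Q = 2\<close> by simp
    define w where "w = peval q T u"
    have w: "w \<noteq> 0" "w \<in> R" using minq[OF \<open>q \<noteq> 0\<close>] \<open>degree p = degree q + 2\<close> p
        peval_in[OF lin R u(1)] by (auto simp: w_def)
    have "peval Q T w = peval (Q * q) T u" by (simp only: peval_mult[OF lin] w_def)
    then have "peval Q T w = 0" using p pQq by simp
    then have "(a^2 + b^2) *\<^sub>R w + T ((-2*a) *\<^sub>R w + T w) = 0"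
      using lin by (simp add: Q_def peval_pCons linear_0)
    moreover have "T ((-2*a) *\<^sub>R w + T w) = (-2*a) *\<^sub>R T w + T (T w)"
      using lin by (simp add: linear_add linear_diff linear_scale)
    ultimately have e: "(a^2 + b^2) *\<^sub>R w + ((-2*a) *\<^sub>R T w + T (T w)) = 0" by simp
    have "T (T w) = ((a^2 + b^2) *\<^sub>R w + ((-2*a) *\<^sub>R T w + T (T w))) - (a^2 + b^2) *\<^sub>R w - (-2*a) *\<^sub>R T w"
      by simp
    also have "\<dots> = (2*a) *\<^sub>R T w - (a^2 + b^2) *\<^sub>R w" unfolding e by simp
    finally have TTw: "T (T w) = (2*a) *\<^sub>R T w - (a^2 + b^2) *\<^sub>R w" .
    define u' where "u' = T w - a *\<^sub>R w"
    define v' where "v' = b *\<^sub>R w"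
    have "T u' = T (T w) - a *\<^sub>R T w" using lin by (simp add: u'_def linear_diff linear_scale)
    also have "\<dots> = (2*a) *\<^sub>R T w - (a^2 + b^2) *\<^sub>R w - a *\<^sub>R T w" using TTw by simp
    also have "(2*a) *\<^sub>R T w = a *\<^sub>R T w + a *\<^sub>R T w" by (simp add: scaleR_add_left[symmetric])
    also have "a *\<^sub>R T w + a *\<^sub>R T w - (a^2 + b^2) *\<^sub>R w - a *\<^sub>R T w = a *\<^sub>R u' - b *\<^sub>R v'"
      by (simp add: u'_def v'_def scaleR_diff_right scaleR_add_left power2_eq_square)
    finally have "T u' = a *\<^sub>R u' - b *\<^sub>R v'" .
    moreover have "T v' = b *\<^sub>R u' + a *\<^sub>R v'"
      using lin by (simp add: u'_def v'_def linear_scale algebra_simps)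
    moreover have "u' \<in> R" "v' \<in> R" using w R unfolding u'_def v'_def
      by (auto intro!: subspace_diff subspace_mul)
    moreover have "v' \<noteq> 0" using w False by (simp add: v'_def)
    ultimately have "cplx_eigenvalue_on T R (Complex a b)"
      unfolding cplx_eigenvalue_on_def by auto
    then show ?thesis by blast
  qed
qed


lemma surj_kernel:
  fixes T :: "'a::euclidean_space \<Rightarrow> 'a"
  assumes lin: "linear T" and W: "subspace W" "T ` W = W" and z: "z \<in> W" "T z = 0"
  shows "z = 0"
proof -
  obtain B where B: "B \<subseteq> W" "independent B" "W \<subseteq> span B" "card B = dim W"
    using basis_exists[of W] by blast
  have fB: "finite B" using B(2) independent_bound by blast
  have spB: "span B = W" using B W(1) by (simp add: span_subspace)
  have spTB: "span (T ` B) = W" using span_linear_image[OF lin, of B] spB W(2) by simp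
  have TBW: "T ` B \<subseteq> W" using B(1) W(2) by blast
  have c1: "card (T ` B) \<le> card B" using fB by (rule card_image_le)
  have c2: "dim W \<le> card (T ` B)" using spTB fB by (intro dim_le_card) auto
  have indTB: "independent (T ` B)"
    using TBW spTB fB c1 B(4) by (intro card_le_dim_spanning[of "T ` B" W]) auto
  have injB: "inj_on T B" using c1 c2 B(4) fB by (simp add: inj_on_iff_eq_card)
  have "z \<in> span B" using z spB by simp
  then obtain c where zc: "z = (\<Sum>v\<in>B. c v *\<^sub>R v)" using fB by (auto simp: span_finite)
  have "0 = T z" using z by simp
  also have "\<dots> = (\<Sum>v\<in>B. c v *\<^sub>R T v)" using lin by (simp add: zc linear_sum linear_scale)
  also have "\<dots> = (\<Sum>y\<in>T ` B. c (the_inv_into B T y) *\<^sub>R y)"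
    using injB by (simp add: sum.reindex the_inv_into_f_f)
  finally have S: "(\<Sum>y\<in>T ` B. c (the_inv_into B T y) *\<^sub>R y) = 0" by simp
  have I: "\<forall>c'. (\<Sum>v\<in>T ` B. c' v *\<^sub>R v) = 0 \<longrightarrow> (\<forall>v\<in>T ` B. c' v = 0)"
    using indTB unfolding eucl.independent_explicit by blast
  have "\<forall>y\<in>T ` B. c (the_inv_into B T y) = 0" using I[rule_format, OF S] by blast
  then have "\<forall>v\<in>B. c v = 0" using injB by (auto simp: the_inv_into_f_f)
  then show "z = 0" by (simp add: zc)
qed

lemma linear_funpow: "linear (T :: 'a::real_vector \<Rightarrow> 'a) \<Longrightarrow> linear (T ^^ k)"
proof (induction k)
  case 0 then show ?case by (auto intro!: linearI simp: funpow.simps)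
next
  case (Suc k) then show ?case using linear_compose[of "T ^^ k" T] by (simp add: o_def)
qed

lemma funpow_in: "T ` W \<subseteq> W \<Longrightarrow> v \<in> W \<Longrightarrow> (T ^^ k) v \<in> W"
  by (induction k) auto

lemma eig_mono: "cplx_eigenvalue_on T R \<mu> \<Longrightarrow> R \<subseteq> W \<Longrightarrow> cplx_eigenvalue_on T W \<mu>"
  unfolding cplx_eigenvalue_on_def by blast

lemma nilp:
  fixes T :: "'a::euclidean_space \<Rightarrow> 'a"
  assumes lin: "linear T" and W: "subspace W" "T ` W \<subseteq> W" and ev: "eigenvalues_on T W \<subseteq> {0}"
  shows "(T ^^ dim W) ` W \<subseteq> {0}"
proof -
  define Rk where "Rk k = (T ^^ k) ` W" for k
  have sub: "subspace (Rk k)" for k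
    unfolding Rk_def by (rule linear_subspace_image[OF linear_funpow[OF lin] W(1)])
  have RS: "Rk (Suc k) = T ` Rk k" for k
    unfolding Rk_def by (simp add: image_comp)
  have dec: "Rk (Suc k) \<subseteq> Rk k" for k
  proof (induction k)
    case 0 then show ?case using W(2) by (simp add: RS Rk_def)
  next
    case (Suc k) then show ?case using RS by (metis image_mono)
  qed
  have RW: "Rk k \<subseteq> W" for k
  proof (induction k)
    case 0 then show ?case by (simp add: Rk_def)
  next
    case (Suc k) then show ?case using dec[of k] by blast
  qed
  have stab: "Rk (Suc m) = Rk m" if "Rk (Suc j) = Rk j" "j \<le> m" for j m
    using that(2)
  proof (induction m rule: dec_induct)
    case base then show ?case using that(1) .
  next
    case (step m) then show ?case using RS by metis
  qed
  have C: "(\<exists>j\<le>k. Rk (Suc j) = Rk j) \<or> dim (Rk k) + k \<le> dim W" for k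
  proof (induction k)
    case 0 then show ?case by (simp add: Rk_def)
  next
    case (Suc k)
    show ?case
    proof (cases "\<exists>j\<le>Suc k. Rk (Suc j) = Rk j")
      case True then show ?thesis by blast
    next
      case False
      then have "Rk (Suc k) \<noteq> Rk k" "\<not> (\<exists>j\<le>k. Rk (Suc j) = Rk j)" by auto
      with Suc.IH have h: "dim (Rk k) + k \<le> dim W" by blast
      have "span (Rk (Suc k)) \<subset> span (Rk k)"
        using \<open>Rk (Suc k) \<noteq> Rk k\<close> dec[of k] sub by (simp add: span_eq_iff[THEN iffD2] psubset_eq)
      then have "dim (Rk (Suc k)) < dim (Rk k)" by (rule dim_psubset)
      with h show ?thesis by simp
    qed
  qed
  define d where "d = dim W"
  show ?thesis
  proof (cases "Rk (Suc d) = Rk d")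
    case False
    then have "dim (Rk d) = 0" using C[of d] stab d_def by fastforce
    then show ?thesis by (simp add: Rk_def d_def)
  next
    case True
    then have TR: "T ` Rk d = Rk d" using RS by metis
    show ?thesis
    proof (rule ccontr)
      assume "\<not> ?thesis"
      then obtain u0 where u0: "u0 \<in> Rk d" "u0 \<noteq> 0" by (auto simp: Rk_def d_def)
      obtain \<mu> where mu: "cplx_eigenvalue_on T (Rk d) \<mu>"
        using exists_eig[OF lin sub, of d, OF _ u0] TR by blast
      then have "\<mu> = 0" using eig_mono[OF mu RW] ev by (auto simp: eigenvalues_on_def)
      with mu obtain u v where uv: "u \<in> Rk d" "v \<in> Rk d" "u \<noteq> 0 \<or> v \<noteq> 0" "T u = 0" "T v = 0"
        unfolding cplx_eigenvalue_on_def by auto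
      then show False using surj_kernel[OF lin sub TR] by blast
    qed
  qed
qed


lemma semigroup_pow:
  assumes "is_semigroup g" "y \<ge> 0"
  shows "g (real k * y) = g y ^^ k"
proof (induction k)
  case 0 then show ?case using assms by (simp add: is_semigroup_def)
next
  case (Suc k)
  have "g (real (Suc k) * y) = g (y + real k * y)" by (simp add: algebra_simps)
  also have "\<dots> = g y \<circ> g (real k * y)" using assms unfolding is_semigroup_def by simp
  finally show ?case using Suc by simp
qed

theorem mainTheorem5:
  fixes g :: "real \<Rightarrow> 'a::euclidean_space \<Rightarrow> 'a" and n :: nat and V :: "nat \<Rightarrow> 'a set"
  assumes "is_semigroup g" and "is_SRPD g n V"
  defines "I \<equiv> {i. i < n \<and> first_type g (V i) \<and>
                   (\<forall>x>0. eigenvalues_on (g x) (V i) = {0})}"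
  shows "\<forall>x>0. {v. g x v = 0} = {\<Sum>i\<in>I. w i | w. \<forall>i\<in>I. w i \<in> V i}"
proof (intro allI impI)
  fix x :: real assume x: "x > 0"
  have lin: "\<And>y. y \<ge> 0 \<Longrightarrow> linear (g y)" using assms(1) by (simp add: is_semigroup_def)
  have g0: "g 0 = id" using assms(1) by (simp add: is_semigroup_def)
  have gadd: "\<And>y z. y \<ge> 0 \<Longrightarrow> z \<ge> 0 \<Longrightarrow> g (y + z) = g y \<circ> g z"
    using assms(1) by (simp add: is_semigroup_def)
  have sub: "\<And>i. i < n \<Longrightarrow> subspace (V i)" and nz: "\<And>i. i < n \<Longrightarrow> V i \<noteq> {0}"
    and inv: "\<And>i y. i < n \<Longrightarrow> y \<ge> 0 \<Longrightarrow> g y ` V i \<subseteq> V i"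
    and styp: "\<And>i. i < n \<Longrightarrow> first_type g (V i) \<or> second_type g (V i)"
    using assms(2) by (auto simp: is_SRPD_def)
  have dec: "\<forall>v. \<exists>w. (\<forall>i<n. w i \<in> V i) \<and> v = (\<Sum>i<n. w i)"
    and uniq: "\<forall>w. (\<forall>i<n. w i \<in> V i) \<and> (\<Sum>i<n. w i) = 0 \<longrightarrow> (\<forall>i<n. w i = 0)"
    using assms(2) by (auto simp: is_SRPD_def)
  have K1: "g x v = 0" if i: "i \<in> I" and v: "v \<in> V i" for i v
  proof -
    have i': "i < n" "\<forall>y>0. eigenvalues_on (g y) (V i) = {0}" using i by (auto simp: I_def)
    define d where "d = dim (V i)"
    have "d \<noteq> 0" using nz[OF i'(1)] sub[OF i'(1)] by (auto simp: d_def subspace_0)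
    define y where "y = x / real d"
    have y: "y > 0" using x \<open>d \<noteq> 0\<close> by (simp add: y_def)
    have "(g y ^^ d) ` V i \<subseteq> {0}"
      unfolding d_def
      by (rule nilp[OF lin sub[OF i'(1)] inv[OF i'(1)]]) (use y i' in auto)
    moreover have "g x = g y ^^ d"
      using semigroup_pow[OF assms(1), of y d] y \<open>d \<noteq> 0\<close> by (simp add: y_def)
    ultimately show ?thesis using v by auto
  qed
  have K2: "v = 0" if i: "i < n" "i \<notin> I" and v: "v \<in> V i" "g x v = 0" for i v
  proof -
    obtain u1 where u1: "u1 \<in> V i" "u1 \<noteq> 0" using nz[OF i(1)] sub[OF i(1)] subspace_0 by blast
    have ex: "\<exists>x0>0. 0 \<notin> eigenvalues_on (g x0) (V i)"
    proof (cases "first_type g (V i)")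
      case True
      then obtain x0 where x0: "x0 > 0" "eigenvalues_on (g x0) (V i) \<noteq> {0}"
        using i by (auto simp: I_def)
      obtain r where "eigenvalues_on (g x0) (V i) = {complex_of_real r}"
        using True x0(1) unfolding first_type_def by (meson less_imp_le)
      with x0 show ?thesis by auto
    next
      case False
      then obtain lam x0 where l: "\<forall>x\<ge>0. eigenvalues_on (g x) (V i) \<subseteq> {lam x, cnj (lam x)}"
        "x0 \<ge> 0" "lam x0 \<notin> \<real>"
        using styp[OF i(1)] by (auto simp: second_type_def)
      have "x0 \<noteq> 0"
      proof
        assume "x0 = 0"
        have "1 \<in> eigenvalues_on (g 0) (V i)"
          unfolding eigenvalues_on_def cplx_eigenvalue_on_def g0
          using u1 sub[OF i(1)] by (intro CollectI bexI[of _ u1] bexI[of _ 0]) (auto simp: subspace_0)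
        moreover have "eigenvalues_on (g 0) (V i) \<subseteq> {lam 0, cnj (lam 0)}" using l(1) by simp
        ultimately have "1 = lam 0 \<or> 1 = cnj (lam 0)" by blast
        then have "lam 0 = 1" using complex_cnj_cnj[of "lam 0"] by auto
        then have "lam 0 \<in> \<real>" by simp
        with l(3) \<open>x0 = 0\<close> show False by simp
      qed
      have nz0: "0 \<notin> eigenvalues_on (g x0) (V i)"
      proof
        assume "0 \<in> eigenvalues_on (g x0) (V i)"
        moreover have "eigenvalues_on (g x0) (V i) \<subseteq> {lam x0, cnj (lam x0)}" using l by simp
        ultimately have "0 = lam x0 \<or> 0 = cnj (lam x0)" by blast
        then have "lam x0 = 0" using complex_cnj_cnj[of "lam x0"] by auto
        then have "lam x0 \<in> \<real>" by simp
        with l(3) show False by blast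
      qed
      have "x0 > 0" using l(2) \<open>x0 \<noteq> 0\<close> by linarith
      with nz0 show ?thesis by blast
    qed
    then obtain x0 where x0: "x0 > 0" "0 \<notin> eigenvalues_on (g x0) (V i)" by blast
    have inj0: "u = 0" if "u \<in> V i" "g x0 u = 0" for u
    proof (rule ccontr)
      assume "u \<noteq> 0"
      then have "cplx_eigenvalue_on (g x0) (V i) 0"
        unfolding cplx_eigenvalue_on_def using that sub[OF i(1)] lin[of x0] x0
        by (intro bexI[of _ u] bexI[of _ 0]) (auto simp: subspace_0 linear_0)
      with x0 show False by (simp add: eigenvalues_on_def)
    qed
    have injk: "(g x0 ^^ k) u = 0 \<Longrightarrow> u \<in> V i \<Longrightarrow> u = 0" for k u
    proof (induction k arbitrary: u)
      case 0 then show ?case by simp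
    next
      case (Suc k)
      have "(g x0 ^^ k) u \<in> V i" using funpow_in[OF inv[OF i(1)], of x0 u k] Suc x0 by simp
      moreover have "g x0 ((g x0 ^^ k) u) = 0" using Suc.prems by simp
      ultimately have "(g x0 ^^ k) u = 0" using inj0 by blast
      then show ?case using Suc by simp
    qed
    obtain k where k: "x < real k * x0" using ex_less_of_nat_mult[OF x0(1)] by blast
    have "g (real k * x0) = g (real k * x0 - x) \<circ> g x"
      using gadd[of "real k * x0 - x" x] k x by simp
    then have "g (real k * x0) v = 0" using v lin[of "real k * x0 - x"] k by (simp add: linear_0)
    then have "(g x0 ^^ k) v = 0" using semigroup_pow[OF assms(1), of x0 k] x0 by simp
    then show ?thesis using injk v by blast
  qed
  have In: "I \<subseteq> {..<n}" by (auto simp: I_def)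
  show "{v. g x v = 0} = {\<Sum>i\<in>I. w i | w. \<forall>i\<in>I. w i \<in> V i}"
  proof (intro set_eqI iffI)
    fix v assume "v \<in> {v. g x v = 0}"
    then have gv: "g x v = 0" by simp
    obtain w where w: "\<forall>i<n. w i \<in> V i" "v = (\<Sum>i<n. w i)" using dec by blast
    have "(\<Sum>i<n. g x (w i)) = 0" using gv w lin[of x] x by (simp add: linear_sum)
    moreover have "\<forall>i<n. g x (w i) \<in> V i" using w inv[of _ x] x by auto
    ultimately have A: "(\<forall>i<n. g x (w i) \<in> V i) \<and> (\<Sum>i<n. g x (w i)) = 0" by blast
    have "\<forall>i<n. g x (w i) = 0" using mp[OF spec[OF uniq, of "\<lambda>i. g x (w i)"] A] .
    then have wz: "\<forall>i<n. i \<notin> I \<longrightarrow> w i = 0" using K2 w by blast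
    have "v = (\<Sum>i\<in>I. w i)"
      unfolding w(2) using In wz by (intro sum.mono_neutral_right) auto
    then show "v \<in> {\<Sum>i\<in>I. w i | w. \<forall>i\<in>I. w i \<in> V i}" using w(1) In by blast
  next
    fix v assume "v \<in> {\<Sum>i\<in>I. w i | w. \<forall>i\<in>I. w i \<in> V i}"
    then obtain w where w: "\<forall>i\<in>I. w i \<in> V i" "v = (\<Sum>i\<in>I. w i)" by blast
    have "g x v = (\<Sum>i\<in>I. g x (w i))" using w lin[of x] x by (simp add: linear_sum)
    also have "\<dots> = 0" by (intro sum.neutral ballI) (use K1 w in blast)
    finally show "v \<in> {v. g x v = 0}" by simp
  qed
qed

end
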